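(* For every $\varepsilon>0$ the series $$\sum_{\boldsymbol{\mathcal E}\in\operatorname{Div}_{\mathrm{eff}}(\mathscr C)^7}|\mu_S(\boldsymbol{\mathcal E})|\,q^{-(\frac12+\varepsilon)\left[\deg\mathcal E_0+\sum_{i=1}^3\deg\mathcal E_i+\sum_{i=1}^3\deg\mathcal F_i\right]}$$ converges.
   Context: $k$ is a finite field with $q$ elements, $\mathscr C$ a smooth projective geometrically integral curve over $k$, $\operatorname{Div}_{\mathrm{eff}}(\mathscr C)$ its monoid of effective divisors. Elements of $\operatorname{Div}_{\mathrm{eff}}(\mathscr C)^7$ are written $\boldsymbol{\mathcal E}=(\mathcal E_0,\mathcal E_1,\mathcal E_2,\mathcal E_3,\mathcal F_1,\mathcal F_2,\mathcal F_3)$. Let $\operatorname{Div}_{S,\mathrm{prim}}$ be the set of $\boldsymbol{\mathcal E}$ such that the gcd (at each closed point, the minimum of multiplicities) of the seven effective divisors $\sum_{j\neq i}\mathcal E_j+\sum_{j=1}^3\mathcal F_j$ ($i=1,2,3$), $\mathcal E_0+\sum_{j\neq i}(\mathcal E_j+\mathcal F_j)$ ($i=1,2,3$) and $\mathcal E_0+\sum_{j=1}^3\mathcal E_j$ is $0$ (indices $j$ in $\{1,2,3\}$). $\mu_S:\operatorname{Div}_{\mathrm{eff}}(\mathscr C)^7\to\mathbf C$ is the unique function with $\mathbf 1_{\operatorname{Div}_{S,\mathrm{prim}}}(\boldsymbol{\mathcal D})=\sum_{0\leq\boldsymbol{\mathcal E}\leq\boldsymbol{\mathcal D}}\mu_S(\boldsymbol{\mathcal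 E})$ for all $\boldsymbol{\mathcal D}$ (componentwise inequalities). *)

theory Defs
  imports "HOL-Analysis.Analysis" "HOL-Computational_Algebra.Primes"
begin

text \<open>Abstract model of the closed points of a smooth projective geometrically
integral curve over a finite field with q elements: a type 'p of closed points
with a degree map. The only properties of the curve used are encoded by
curve_points below (rationality + Riemann hypothesis of the zeta function,
i.e. the Weil formula for the number of points over extensions).\<close>

definition curve_points :: "nat \<Rightarrow> ('p \<Rightarrow> nat) \<Rightarrow> bool" where
  "curve_points q dg \<longleftrightarrow>
     (\<exists>p n. prime p \<and> n \<ge> 1 \<and> q = p ^ n) \<and>
     (\<forall>P. dg P \<ge> 1) \<and>
     (\<forall>d. finite {P. dg P = d}) \<and>
     (\<exists>\<omega> :: complex list. even (length \<omega>) \<and>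
        (\<forall>w\<in>set \<omega>. cmod w = sqrt (real q)) \<and>
        (\<forall>n\<ge>1. of_nat (\<Sum>d | d dvd n. d * card {P. dg P = d})
               = of_nat (q ^ n) + 1 - (\<Sum>w\<leftarrow>\<omega>. w ^ n)))"

definition eff_div :: "('p \<Rightarrow> nat) \<Rightarrow> bool" where
  "eff_div D \<longleftrightarrow> finite {P. D P \<noteq> 0}"

definition div_deg :: "('p \<Rightarrow> nat) \<Rightarrow> ('p \<Rightarrow> nat) \<Rightarrow> nat" where
  "div_deg dg D = (\<Sum>P | D P \<noteq> 0. dg P * D P)"

text \<open>7-tuples of effective divisors, indexed 0..6:
  index 0 = E_0, indices 1,2,3 = E_1,E_2,E_3, indices 4,5,6 = F_1,F_2,F_3;
  components with index \<ge> 7 are zero.\<close>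
definition Div7 :: "(nat \<Rightarrow> 'p \<Rightarrow> nat) set" where
  "Div7 = {E. (\<forall>i<7. eff_div (E i)) \<and> (\<forall>i\<ge>7. E i = (\<lambda>_. 0))}"

definition tuple_le :: "(nat \<Rightarrow> 'p \<Rightarrow> nat) \<Rightarrow> (nat \<Rightarrow> 'p \<Rightarrow> nat) \<Rightarrow> bool" where
  "tuple_le E D \<longleftrightarrow> (\<forall>i P. E i P \<le> D i P)"

text \<open>The seven divisors whose gcd is taken (as functions of the point).\<close>
definition S_forms :: "(nat \<Rightarrow> 'p \<Rightarrow> nat) \<Rightarrow> ('p \<Rightarrow> nat) list" where
  "S_forms E =
    map (\<lambda>i. (\<lambda>P. (\<Sum>j\<in>{1,2,3} - {i}. E j P) + E 4 P + E 5 P + E 6 P)) [1,2,3] @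
    map (\<lambda>i. (\<lambda>P. E 0 P + (\<Sum>j\<in>{1,2,3} - {i}. E j P + E (j+3) P))) [1,2,3] @
    [(\<lambda>P. E 0 P + E 1 P + E 2 P + E 3 P)]"

text \<open>gcd of the seven divisors is 0: at every closed point the minimum of
  the multiplicities is 0.\<close>
definition Div_S_prim :: "(nat \<Rightarrow> 'p \<Rightarrow> nat) set" where
  "Div_S_prim = {E \<in> Div7. \<forall>P. Min ((\<lambda>f. f P) ` set (S_forms E)) = 0}"

definition mu_S :: "(nat \<Rightarrow> 'p \<Rightarrow> nat) \<Rightarrow> complex" where
  "mu_S = (THE f. (\<forall>D\<in>Div7. (if D \<in> Div_S_prim then 1 else 0)
                      = (\<Sum>E | tuple_le E D. f E))
               \<and> (\<forall>D. D \<notin> Div7 \<longrightarrow> f D = 0))"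

definition total_deg :: "('p \<Rightarrow> nat) \<Rightarrow> (nat \<Rightarrow> 'p \<Rightarrow> nat) \<Rightarrow> nat" where
  "total_deg dg E = (\<Sum>i<7. div_deg dg (E i))"

end

theory Submission
  imports Defs "HOL-Library.FuncSet"
begin

definition goodS :: "nat set \<Rightarrow> bool" where
  "goodS T \<longleftrightarrow> (\<exists>K\<in>{{2,3,4,5,6},{1,3,4,5,6},{1,2,4,5,6},{0,2,3,5,6},{0,1,3,4,6},{0,1,2,4,5},{0,1,2,3::nat}}. K \<inter> T = {})"

definition pat :: "(nat \<Rightarrow> nat) \<Rightarrow> nat set" where
  "pat v = {i. i < 7 \<and> v i \<noteq> 0}"

lemma Min_zero_iff: "finite A \<Longrightarrow> A \<noteq> {} \<Longrightarrow> Min A = (0::nat) \<longleftrightarrow> 0 \<in> A"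
  by (metis Min_in Min_le le_zero_eq)

lemma prim_point_iff:
  "Min ((\<lambda>f. f P) ` set (S_forms E)) = 0 \<longleftrightarrow> goodS (pat (\<lambda>i. E i P))"
  apply (subst Min_zero_iff)
    apply (simp add: S_forms_def)
   apply (simp add: S_forms_def)
  apply (simp add: S_forms_def goodS_def pat_def insert_Diff_if)
  apply auto
  done

definition gd :: "nat set \<Rightarrow> int" where "gd T = (if goodS T then 1 else 0)"

definition loc :: "nat set \<Rightarrow> int" where
  "loc T = (-1) ^ card T * (\<Sum>U\<in>Pow T. (-1) ^ card U * gd U)"

lemma loc_sum: "finite S \<Longrightarrow> (\<Sum>T\<in>Pow S. loc T) = gd S"
proof -
  assume fS: "finite S"
  have "gd S = (\<Sum>T\<in>Pow S. (-1) ^ card T * (\<Sum>U\<in>Pow T. (-1) ^ card U * gd U))"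
    by (rule inclusion_exclusion_symmetric[where g="\<lambda>T. (\<Sum>U\<in>Pow T. (-1) ^ card U * gd U)"]) (auto simp: fS)
  also have "\<dots> = (\<Sum>T\<in>Pow S. loc T)" by (simp add: loc_def)
  finally show ?thesis by simp
qed

lemma goodS_empty: "goodS {}"
  unfolding goodS_def by blast

lemma loc_empty: "loc {} = 1"
  by (simp add: loc_def gd_def goodS_empty)

lemma loc_single: "i < 7 \<Longrightarrow> loc {i} = 0"
proof -
  assume "i < 7"
  then have "i = 0 \<or> i = 1 \<or> i = 2 \<or> i = 3 \<or> i = 4 \<or> i = 5 \<or> i = 6" by arith
  then have "goodS {i}" by (elim disjE) (simp_all add: goodS_def)
  moreover have "Pow {i} = {{}, {i}}" by auto
  ultimately show ?thesis by (simp add: loc_def gd_def goodS_empty)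
qed

lemma abs_loc: "finite T \<Longrightarrow> \<bar>loc T\<bar> \<le> 2 ^ card T"
proof -
  assume fT: "finite T"
  have "\<bar>loc T\<bar> = \<bar>\<Sum>U\<in>Pow T. (-1) ^ card U * gd U\<bar>" by (simp add: loc_def abs_mult)
  also have "\<dots> \<le> (\<Sum>U\<in>Pow T. \<bar>(-1) ^ card U * gd U\<bar>)" by (rule sum_abs)
  also have "\<dots> \<le> (\<Sum>U\<in>Pow T. 1)"
    by (intro sum_mono) (simp add: gd_def abs_mult power_abs)
  also have "\<dots> = 2 ^ card T" using fT by (simp add: card_Pow)
  finally show ?thesis .
qed

definition mv :: "(nat \<Rightarrow> nat) \<Rightarrow> int" where
  "mv v = (if \<forall>i. v i \<le> 1 then loc (pat v) else 0)"

definition ind :: "nat set \<Rightarrow> nat \<Rightarrow> nat" where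
  "ind V = (\<lambda>i. if i \<in> V then 1 else 0)"

lemma pat_ind: "V \<subseteq> {..<7} \<Longrightarrow> pat (ind V) = V"
  by (auto simp: pat_def ind_def)

lemma mv_ind: "V \<subseteq> {..<7} \<Longrightarrow> mv (ind V) = loc V"
  by (simp add: mv_def pat_ind) (simp add: ind_def)

lemma mv_zero: "mv (\<lambda>_. 0) = 1"
  by (simp add: mv_def pat_def loc_empty)

lemma finite_below:
  fixes w :: "nat \<Rightarrow> nat"
  assumes "\<forall>i\<ge>7. w i = 0"
  shows "finite {v. \<forall>i. v i \<le> w i}"
proof -
  have "finite ((\<lambda>v. restrict v {..<7}) ` {v. \<forall>i. v i \<le> w i})"
    by (rule finite_subset[OF _ finite_PiE[of "{..<7::nat}" "\<lambda>i. {..w i}"]]) (auto simp: PiE_iff split: if_splits)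
  moreover have "inj_on (\<lambda>v. restrict v {..<7}) {v. \<forall>i. v i \<le> w i}"
  proof (rule inj_onI)
    fix x y assume x: "x \<in> {v. \<forall>i. v i \<le> w i}" and y: "y \<in> {v. \<forall>i. v i \<le> w i}"
      and e: "restrict x {..<7} = restrict y {..<7}"
    show "x = y"
    proof
      fix i show "x i = y i"
      proof (cases "i < 7")
        case True then show ?thesis using fun_cong[OF e, of i] by simp
      next
        case False then show ?thesis using x y assms by (simp add: not_less) (metis le_zero_eq)
      qed
    qed
  qed
  ultimately show ?thesis using finite_imageD by blast
qed

lemma local_sum:
  assumes w7: "\<forall>i\<ge>7. w i = 0"
  shows "(\<Sum>v | \<forall>i. v i \<le> w i. mv v) = gd (pat w)"
proof -
  let ?B = "{v. \<forall>i. v i \<le> w i}"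
  have fB: "finite ?B" by (rule finite_below[OF w7])
  have injI: "inj_on ind (Pow (pat w))"
  proof (rule inj_onI)
    fix x y assume "x \<in> Pow (pat w)" "y \<in> Pow (pat w)" "ind x = ind y"
    moreover have "pat w \<subseteq> {..<7}" by (auto simp: pat_def)
    ultimately show "x = y" using pat_ind by (metis PowD subset_trans)
  qed
  have "(\<Sum>v\<in>?B. mv v) = (\<Sum>v\<in>ind ` Pow (pat w). mv v)"
  proof (rule sum.mono_neutral_right[OF fB])
    show "ind ` Pow (pat w) \<subseteq> ?B"
      by (auto simp: ind_def pat_def)
    show "\<forall>v\<in>?B - ind ` Pow (pat w). mv v = 0"
    proof
      fix v assume v: "v \<in> ?B - ind ` Pow (pat w)"
      show "mv v = 0"
      proof (rule ccontr)
        assume "mv v \<noteq> 0"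
        then have le1: "\<forall>i. v i \<le> 1" by (simp add: mv_def split: if_splits)
        have "v = ind (pat v)"
        proof
          fix i
          have "v i \<le> w i" using v by simp
          then show "v i = ind (pat v) i"
            using le1[rule_format, of i] w7[rule_format, of i] by (cases "i < 7") (auto simp: ind_def pat_def)
        qed
        moreover have "pat v \<subseteq> pat w"
        proof
          fix i assume i: "i \<in> pat v"
          have "v i \<le> w i" using v by simp
          then show "i \<in> pat w" using i by (simp add: pat_def)
        qed
        ultimately have "v \<in> ind ` Pow (pat w)" by (metis PowI image_eqI)
        then show False using v by simp
      qed
    qed
  qed
  also have "\<dots> = (\<Sum>V\<in>Pow (pat w). mv (ind V))" using injI by (simp add: sum.reindex)
  also have "\<dots> = (\<Sum>V\<in>Pow (pat w). loc V)"
    by (intro sum.cong refl mv_ind) (auto simp: pat_def)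
  also have "\<dots> = gd (pat w)" by (rule loc_sum) (simp add: pat_def)
  finally show ?thesis .
qed

definition supp :: "(nat \<Rightarrow> 'p \<Rightarrow> nat) \<Rightarrow> 'p set" where
  "supp E = {P. \<exists>i<7. E i P \<noteq> 0}"

definition col :: "(nat \<Rightarrow> 'p \<Rightarrow> nat) \<Rightarrow> 'p \<Rightarrow> nat \<Rightarrow> nat" where
  "col E P = (\<lambda>i. E i P)"

definition fmu :: "(nat \<Rightarrow> 'p \<Rightarrow> nat) \<Rightarrow> complex" where
  "fmu E = (if E \<in> Div7 then of_int (\<Prod>P\<in>supp E. mv (col E P)) else 0)"

definition emb :: "'p set \<Rightarrow> ('p \<Rightarrow> nat \<Rightarrow> nat) \<Rightarrow> nat \<Rightarrow> 'p \<Rightarrow> nat" where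
  "emb A w = (\<lambda>i P. if P \<in> A then w P i else 0)"

lemma finite_supp: "E \<in> Div7 \<Longrightarrow> finite (supp E)"
proof -
  assume E: "E \<in> Div7"
  have "supp E = (\<Union>i\<in>{..<7}. {P. E i P \<noteq> 0})" by (auto simp: supp_def)
  moreover have "\<forall>i\<in>{..<7::nat}. finite {P. E i P \<noteq> 0}" using E by (auto simp: Div7_def eff_div_def)
  ultimately show ?thesis by simp
qed

lemma Div7_hi: "E \<in> Div7 \<Longrightarrow> i \<ge> 7 \<Longrightarrow> E i P = 0"
  by (simp add: Div7_def)

lemma col_out: "E \<in> Div7 \<Longrightarrow> P \<notin> supp E \<Longrightarrow> col E P = (\<lambda>_. 0)"
proof
  fix i assume E: "E \<in> Div7" and P: "P \<notin> supp E"
  show "col E P i = 0"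
  proof (cases "i < 7")
    case True then show ?thesis using P by (auto simp: supp_def col_def)
  next
    case False then show ?thesis using Div7_hi[OF E] by (simp add: col_def)
  qed
qed

lemma fmu_ext:
  assumes E: "E \<in> Div7" and A: "finite A" "supp E \<subseteq> A"
  shows "fmu E = of_int (\<Prod>P\<in>A. mv (col E P))"
proof -
  have "(\<Prod>P\<in>supp E. mv (col E P)) = (\<Prod>P\<in>A. mv (col E P))"
    by (rule prod.mono_neutral_left[OF A(1) A(2)]) (simp add: col_out[OF E] mv_zero)
  then show ?thesis using E by (simp add: fmu_def)
qed

lemma le_Div7:
  assumes D: "D \<in> Div7" and le: "tuple_le E D"
  shows "E \<in> Div7" "supp E \<subseteq> supp D"
proof -
  have le': "E i P \<le> D i P" for i P using le by (simp add: tuple_le_def)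
  have "\<forall>i<7. eff_div (E i)"
  proof (intro allI impI)
    fix i :: nat assume "i < 7"
    then have "finite {P. D i P \<noteq> 0}" using D by (simp add: Div7_def eff_div_def)
    moreover have "{P. E i P \<noteq> 0} \<subseteq> {P. D i P \<noteq> 0}"
    proof
      fix P assume "P \<in> {P. E i P \<noteq> 0}"
      then show "P \<in> {P. D i P \<noteq> 0}" using le'[of i P] by simp
    qed
    ultimately show "eff_div (E i)" by (simp add: eff_div_def finite_subset)
  qed
  moreover have "\<forall>i\<ge>7. E i = (\<lambda>_. 0)"
  proof (intro allI impI ext)
    fix i P assume "7 \<le> (i::nat)"
    then show "E i P = 0" using le'[of i P] Div7_hi[OF D, of i P] by simp
  qed
  ultimately show "E \<in> Div7" by (simp add: Div7_def)
  show "supp E \<subseteq> supp D"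
  proof
    fix P assume "P \<in> supp E"
    then obtain i where "i < 7" "E i P \<noteq> 0" by (auto simp: supp_def)
    then show "P \<in> supp D" using le'[of i P] by (auto simp: supp_def)
  qed
qed

lemma inj_emb: "inj_on (emb A) (PiE A B)"
proof (rule inj_onI)
  fix x y assume x: "x \<in> PiE A B" and y: "y \<in> PiE A B" and e: "emb A x = emb A y"
  show "x = y"
  proof
    fix P show "x P = y P"
    proof (cases "P \<in> A")
      case True
      show ?thesis
      proof
        fix i show "x P i = y P i" using fun_cong[OF fun_cong[OF e, of i], of P] True by (simp add: emb_def)
      qed
    next
      case False then show ?thesis using x y by (simp add: PiE_def extensional_def)
    qed
  qed
qed

lemma below_eq:
  assumes D: "D \<in> Div7"
  shows "{E. tuple_le E D} = emb (supp D) ` PiE (supp D) (\<lambda>P. {v. \<forall>i. v i \<le> D i P})"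
proof (intro equalityI subsetI)
  fix E assume "E \<in> {E. tuple_le E D}"
  then have le: "tuple_le E D" by simp
  have "E = emb (supp D) (restrict (col E) (supp D))"
  proof (intro ext)
    fix i P show "E i P = emb (supp D) (restrict (col E) (supp D)) i P"
    proof (cases "P \<in> supp D")
      case True then show ?thesis by (simp add: emb_def col_def)
    next
      case False
      then have "P \<notin> supp E" using le_Div7(2)[OF D le] by auto
      then show ?thesis using False col_out[OF le_Div7(1)[OF D le]] by (simp add: emb_def col_def fun_eq_iff)
    qed
  qed
  moreover have "restrict (col E) (supp D) \<in> PiE (supp D) (\<lambda>P. {v. \<forall>i. v i \<le> D i P})"
    using le by (auto simp: tuple_le_def col_def)
  ultimately show "E \<in> emb (supp D) ` PiE (supp D) (\<lambda>P. {v. \<forall>i. v i \<le> D i P})" by blast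
next
  fix E assume "E \<in> emb (supp D) ` PiE (supp D) (\<lambda>P. {v. \<forall>i. v i \<le> D i P})"
  then obtain w where w: "w \<in> PiE (supp D) (\<lambda>P. {v. \<forall>i. v i \<le> D i P})" and E: "E = emb (supp D) w" by blast
  show "E \<in> {E. tuple_le E D}"
    using w by (auto simp: E tuple_le_def emb_def PiE_iff)
qed

lemma finite_below_tuple:
  assumes D: "D \<in> Div7"
  shows "finite {E. tuple_le E D}"
proof -
  have "finite (PiE (supp D) (\<lambda>P. {v. \<forall>i. v i \<le> D i P}))"
  proof (rule finite_PiE[OF finite_supp[OF D]])
    fix P show "finite {v. \<forall>i. v i \<le> D i P}"
      by (rule finite_below) (simp add: Div7_hi[OF D])
  qed
  then show ?thesis by (simp add: below_eq[OF D])
qed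

lemma prim_iff: "D \<in> Div_S_prim \<longleftrightarrow> D \<in> Div7 \<and> (\<forall>P. goodS (pat (col D P)))"
  by (simp add: Div_S_prim_def prim_point_iff col_def)

lemma existence:
  assumes D: "D \<in> Div7"
  shows "(if D \<in> Div_S_prim then 1 else 0) = (\<Sum>E | tuple_le E D. fmu E)"
proof -
  let ?A = "supp D" and ?B = "\<lambda>P. {v. \<forall>i. v i \<le> D i P}"
  have fA: "finite ?A" by (rule finite_supp[OF D])
  have fB: "\<And>P. finite (?B P)" by (rule finite_below) (simp add: Div7_hi[OF D])
  have "(\<Sum>E | tuple_le E D. fmu E) = (\<Sum>E\<in>emb ?A ` PiE ?A ?B. fmu E)"
    by (simp add: below_eq[OF D])
  also have "\<dots> = (\<Sum>w\<in>PiE ?A ?B. fmu (emb ?A w))"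
    by (simp add: sum.reindex[OF inj_emb])
  also have "\<dots> = (\<Sum>w\<in>PiE ?A ?B. of_int (\<Prod>P\<in>?A. mv (w P)))"
  proof (rule sum.cong[OF refl])
    fix w assume w: "w \<in> PiE ?A ?B"
    have le: "tuple_le (emb ?A w) D" using w by (auto simp: tuple_le_def emb_def PiE_iff)
    have "fmu (emb ?A w) = of_int (\<Prod>P\<in>?A. mv (col (emb ?A w) P))"
      by (rule fmu_ext[OF le_Div7(1)[OF D le] fA le_Div7(2)[OF D le]])
    also have "\<dots> = of_int (\<Prod>P\<in>?A. mv (w P))"
      by (intro arg_cong[where f=of_int] prod.cong refl) (simp add: col_def emb_def)
    finally show "fmu (emb ?A w) = of_int (\<Prod>P\<in>?A. mv (w P))" .
  qed
  also have "\<dots> = of_int (\<Sum>w\<in>PiE ?A ?B. \<Prod>P\<in>?A. mv (w P))" by simp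
  also have "(\<Sum>w\<in>PiE ?A ?B. \<Prod>P\<in>?A. mv (w P)) = (\<Prod>P\<in>?A. \<Sum>v\<in>?B P. mv v)"
    by (rule prod_sum_PiE[symmetric]) (use fA fB in auto)
  also have "\<dots> = (\<Prod>P\<in>?A. gd (pat (col D P)))"
  proof (rule prod.cong[OF refl])
    fix P show "(\<Sum>v\<in>?B P. mv v) = gd (pat (col D P))"
      using local_sum[of "col D P"] by (simp add: Div7_hi[OF D] col_def)
  qed
  also have "\<dots> = (if \<forall>P. goodS (pat (col D P)) then 1 else 0)"
  proof (cases "\<forall>P. goodS (pat (col D P))")
    case True then show ?thesis by (simp add: gd_def)
  next
    case False
    then obtain P where P: "\<not> goodS (pat (col D P))" by blast
    have "P \<in> ?A"
    proof (rule ccontr)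
      assume "P \<notin> ?A"
      then have "col D P = (\<lambda>_. 0)" by (rule col_out[OF D])
      then have "pat (col D P) = {}" by (simp add: pat_def)
      then show False using P goodS_empty by simp
    qed
    then have "(\<Prod>P\<in>?A. gd (pat (col D P))) = 0"
      using fA P by (intro prod_zero) (auto simp: gd_def)
    then show ?thesis using False by simp
  qed
  finally show ?thesis using D by (simp add: prim_iff)
qed

definition cells :: "(nat \<Rightarrow> 'p \<Rightarrow> nat) \<Rightarrow> (nat \<times> 'p \<times> nat) set" where
  "cells D = {(i, P, k). k < D i P}"

lemma finite_cells: "D \<in> Div7 \<Longrightarrow> finite (cells D)"
proof -
  assume D: "D \<in> Div7"
  have "cells D \<subseteq> (\<Union>i\<in>{..<7}. \<Union>P\<in>supp D. (\<lambda>k. (i, P, k)) ` {..<D i P})"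
  proof
    fix x assume "x \<in> cells D"
    then obtain i P k where x: "x = (i, P, k)" "k < D i P" by (auto simp: cells_def)
    then have "i < 7" using Div7_hi[OF D, of i P] by (cases "i < 7") auto
    moreover have "P \<in> supp D" using x \<open>i < 7\<close> by (auto simp: supp_def)
    ultimately show "x \<in> (\<Union>i\<in>{..<7}. \<Union>P\<in>supp D. (\<lambda>k. (i, P, k)) ` {..<D i P})"
      using x by blast
  qed
  moreover have "finite (\<Union>i\<in>{..<7}. \<Union>P\<in>supp D. (\<lambda>k. (i, P, k)) ` {..<D i P})"
    using finite_supp[OF D] by auto
  ultimately show ?thesis by (rule finite_subset)
qed

definition spec :: "((nat \<Rightarrow> 'p \<Rightarrow> nat) \<Rightarrow> complex) \<Rightarrow> bool" where
  "spec f \<longleftrightarrow> (\<forall>D\<in>(Div7::(nat \<Rightarrow> 'p \<Rightarrow> nat) set). (if D \<in> Div_S_prim then 1 else 0) = (\<Sum>E | tuple_le E D. f E))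
               \<and> (\<forall>D::nat \<Rightarrow> 'p \<Rightarrow> nat. D \<notin> Div7 \<longrightarrow> f D = 0)"

lemma spec_in: "spec f \<Longrightarrow> D \<in> Div7 \<Longrightarrow> (if D \<in> Div_S_prim then 1 else 0) = (\<Sum>E | tuple_le E D. f E)"
  unfolding spec_def by (erule conjE) (erule bspec)

lemma spec_out: "spec f \<Longrightarrow> D \<notin> Div7 \<Longrightarrow> f D = 0"
  unfolding spec_def by (erule conjE) (erule allE, erule mp)

lemma uniq_aux:
  fixes f g :: "(nat \<Rightarrow> 'p \<Rightarrow> nat) \<Rightarrow> complex"
  assumes f: "spec f" and g: "spec g"
  shows "\<forall>D::nat \<Rightarrow> 'p \<Rightarrow> nat. D \<in> Div7 \<longrightarrow> card (cells D) = n \<longrightarrow> f D = g D"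
proof (induction n rule: less_induct)
  case (less n)
  show ?case
  proof (intro allI impI)
    fix D :: "nat \<Rightarrow> 'p \<Rightarrow> nat" assume D: "D \<in> Div7" and n: "card (cells D) = n"
    let ?S = "{E. tuple_le E D}"
    have fS: "finite ?S" by (rule finite_below_tuple[OF D])
    have DS: "D \<in> ?S" by (simp add: tuple_le_def)
    have IH: "f E = g E" if E: "E \<in> ?S - {D}" for E :: "nat \<Rightarrow> 'p \<Rightarrow> nat"
    proof -
      have le: "tuple_le E D" using E by simp
      have ED: "E \<in> Div7" by (rule le_Div7(1)[OF D le])
      have "cells E \<subseteq> cells D" using le by (auto simp: cells_def tuple_le_def intro: less_le_trans)
      moreover have "cells E \<noteq> cells D"
      proof
        assume eq: "cells E = cells D"
        have "E = D"
        proof (intro ext)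
          fix i P
          have "E i P \<le> D i P" using le by (simp add: tuple_le_def)
          moreover have "\<not> E i P < D i P"
          proof
            assume "E i P < D i P"
            then have "(i, P, E i P) \<in> cells D" by (simp add: cells_def)
            then have "(i, P, E i P) \<in> cells E" using eq by simp
            then show False by (simp add: cells_def)
          qed
          ultimately show "E i P = D i P" by simp
        qed
        then show False using E by simp
      qed
      ultimately have "card (cells E) < card (cells D)"
        by (intro psubset_card_mono finite_cells[OF D]) auto
      then show ?thesis using less.IH n ED by blast
    qed
    have "f D + (\<Sum>E\<in>?S - {D}. f E) = (\<Sum>E\<in>?S. f E)" by (rule sum.remove[OF fS DS, symmetric])
    also have "\<dots> = (\<Sum>E\<in>?S. g E)" using spec_in[OF f D] spec_in[OF g D] by simp
    also have "\<dots> = g D + (\<Sum>E\<in>?S - {D}. g E)" by (rule sum.remove[OF fS DS])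
    also have "(\<Sum>E\<in>?S - {D}. g E) = (\<Sum>E\<in>?S - {D}. f E)" using IH by simp
    finally show "f D = g D" by simp
  qed
qed

lemma spec_fmu: "spec fmu"
  unfolding spec_def
  apply (intro conjI ballI allI impI)
   apply (rule existence, assumption)
  apply (simp add: fmu_def)
  done

lemma mu_S_eq: "(mu_S :: (nat \<Rightarrow> 'p \<Rightarrow> nat) \<Rightarrow> complex) = fmu"
proof -
  have sf: "spec (fmu :: (nat \<Rightarrow> 'p \<Rightarrow> nat) \<Rightarrow> complex)" by (rule spec_fmu)
  have "(mu_S :: (nat \<Rightarrow> 'p \<Rightarrow> nat) \<Rightarrow> complex) = (THE f. spec f)" unfolding mu_S_def spec_def by (rule refl)
  also have "\<dots> = fmu"
  proof (rule the_equality[where P=spec, OF sf])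
    fix f :: "(nat \<Rightarrow> 'p \<Rightarrow> nat) \<Rightarrow> complex" assume f: "spec f"
    show "f = fmu"
    proof
      fix D :: "nat \<Rightarrow> 'p \<Rightarrow> nat" show "f D = fmu D"
      proof (cases "D \<in> Div7")
        case True then show ?thesis using uniq_aux[OF f sf, of "card (cells D)"] by blast
      next
        case False
        then have "f D = 0" by (rule spec_out[OF f])
        moreover have "fmu D = 0" using False by (simp add: fmu_def)
        ultimately show ?thesis by simp
      qed
    qed
  qed
  finally show ?thesis .
qed

lemma norm_sum_list_pow:
  assumes "\<forall>w\<in>set \<omega>. cmod w = r"
  shows "cmod (\<Sum>w\<leftarrow>\<omega>. w ^ n) \<le> real (length \<omega>) * r ^ n"
  using assms
proof (induction \<omega>)
  case Nil then show ?case by simp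
next
  case (Cons a \<omega>)
  have "cmod (\<Sum>w\<leftarrow>a # \<omega>. w ^ n) \<le> cmod (a ^ n) + cmod (\<Sum>w\<leftarrow>\<omega>. w ^ n)"
    by (simp add: norm_triangle_ineq)
  also have "\<dots> \<le> r ^ n + real (length \<omega>) * r ^ n"
    using Cons by (simp add: norm_power)
  finally show ?case by (simp add: algebra_simps)
qed

lemma q_ge2: "curve_points q dg \<Longrightarrow> q \<ge> 2"
proof -
  assume "curve_points q dg"
  then obtain p n where p: "prime (p::nat)" "n \<ge> 1" "q = p ^ n" by (auto simp: curve_points_def)
  have "p \<ge> 2" using p(1) by (rule prime_ge_2_nat)
  moreover have "p ^ 1 \<le> p ^ n" using p(2) \<open>p \<ge> 2\<close> by (intro power_increasing) auto
  ultimately show ?thesis using p(3) by simp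
qed

lemma count_bound:
  assumes cp: "curve_points q dg"
  shows "\<exists>K\<ge>0. \<forall>d\<ge>1. real (card {P. dg P = d}) \<le> K * real q ^ d"
proof -
  obtain \<omega> :: "complex list" where om: "\<forall>w\<in>set \<omega>. cmod w = sqrt (real q)"
    "\<forall>n\<ge>1. of_nat (\<Sum>d | d dvd n. d * card {P. dg P = d}) = of_nat (q ^ n) + 1 - (\<Sum>w\<leftarrow>\<omega>. w ^ n)"
    using cp unfolding curve_points_def by blast
  have q2: "q \<ge> 2" by (rule q_ge2[OF cp])
  let ?L = "real (length \<omega>)"
  have "\<forall>n\<ge>1. real (card {P. dg P = n}) \<le> (2 + ?L) * real q ^ n"
  proof (intro allI impI)
    fix n :: nat assume n: "n \<ge> 1"
    have fin: "finite {d. d dvd n}" using n by (intro finite_divisors_nat) auto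
    have "n * card {P. dg P = n} \<le> (\<Sum>d | d dvd n. d * card {P. dg P = d})"
      by (rule member_le_sum[OF _ _ fin, of n "\<lambda>d. d * card {P. dg P = d}"]) auto
    then have "real (n * card {P. dg P = n}) \<le> real (\<Sum>d | d dvd n. d * card {P. dg P = d})"
      by linarith
    also have "\<dots> = cmod (of_nat (\<Sum>d | d dvd n. d * card {P. dg P = d}))"
      by (simp only: norm_of_nat)
    also have "\<dots> = cmod (of_nat (q ^ n) + 1 - (\<Sum>w\<leftarrow>\<omega>. w ^ n))" using om(2) n by simp
    also have "\<dots> \<le> cmod (of_nat (q ^ n) + 1) + cmod (\<Sum>w\<leftarrow>\<omega>. w ^ n)" by (rule norm_triangle_ineq4)
    also have "\<dots> \<le> (real q ^ n + 1) + ?L * sqrt (real q) ^ n"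
    proof (rule add_mono)
      have "cmod (of_nat (q ^ n) + 1) = cmod (of_nat (q ^ n + 1))" by (simp add: add.commute)
      also have "\<dots> = real q ^ n + 1" by (simp only: norm_of_nat) simp
      finally show "cmod (of_nat (q ^ n) + 1) \<le> real q ^ n + 1" by simp
      show "cmod (\<Sum>w\<leftarrow>\<omega>. w ^ n) \<le> ?L * sqrt (real q) ^ n" by (rule norm_sum_list_pow[OF om(1)])
    qed
    also have "\<dots> \<le> (2 + ?L) * real q ^ n"
    proof -
      have q1: "1 \<le> real q" using q2 by simp
      have "1 \<le> real q ^ n" using q1 by simp
      moreover have "sqrt (real q) \<le> real q"
      proof -
        have "real q \<le> real q * real q" using q1 mult_right_mono[of 1 "real q" "real q"] by simp
        then have "sqrt (real q) \<le> sqrt (real q ^ 2)" by (intro real_sqrt_le_mono) (simp add: power2_eq_square)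
        also have "\<dots> = real q" by simp
        finally show ?thesis .
      qed
      then have "sqrt (real q) ^ n \<le> real q ^ n" by (intro power_mono) auto
      then have "?L * sqrt (real q) ^ n \<le> ?L * real q ^ n" by (intro mult_left_mono) auto
      ultimately show ?thesis by (simp add: algebra_simps)
    qed
    finally have "real n * real (card {P. dg P = n}) \<le> (2 + ?L) * real q ^ n" by simp
    moreover have "real (card {P. dg P = n}) \<le> real n * real (card {P. dg P = n})"
      using n mult_right_mono[of 1 "real n" "real (card {P. dg P = n})"] by simp
    ultimately show "real (card {P. dg P = n}) \<le> (2 + ?L) * real q ^ n" by linarith
  qed
  then show ?thesis by (intro exI[of _ "2 + ?L"]) auto
qed

lemma deg_sum_bound:
  assumes cp: "curve_points q dg" and eps: "\<epsilon> > 0"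
  shows "\<exists>B. \<forall>A. finite A \<longrightarrow> (\<Sum>P\<in>A. (real q powr (-(1 + 2*\<epsilon>))) ^ dg P) \<le> B"
proof -
  obtain K where K: "K \<ge> 0" "\<forall>d\<ge>1. real (card {P. dg P = d}) \<le> K * real q ^ d"
    using count_bound[OF cp] by blast
  have q2: "q \<ge> 2" by (rule q_ge2[OF cp])
  have dg1: "\<forall>P. dg P \<ge> 1" and fin: "\<forall>d. finite {P. dg P = d}" using cp by (auto simp: curve_points_def)
  define y where "y = real q powr (-(1 + 2*\<epsilon>))"
  define r where "r = real q powr (- 2*\<epsilon>)"
  have y0: "y \<ge> 0" by (simp add: y_def)
  have r0: "r \<ge> 0" by (simp add: r_def)
  have r1: "r < 1" unfolding r_def using q2 eps by (simp add: powr_less_one)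
  have qy: "real q * y = r"
  proof -
    have "r = real q powr (1 + (-(1 + 2*\<epsilon>)))" by (simp add: r_def)
    also have "\<dots> = real q powr 1 * real q powr (-(1 + 2*\<epsilon>))" by (rule powr_add)
    also have "\<dots> = real q * y" using q2 by (simp add: y_def)
    finally show ?thesis by simp
  qed
  have "(\<Sum>P\<in>A. y ^ dg P) \<le> K * (1 / (1 - r))" if A: "finite A" for A
  proof -
    have "(\<Sum>P\<in>A. y ^ dg P) = (\<Sum>d\<in>dg ` A. \<Sum>P\<in>{P\<in>A. dg P = d}. y ^ dg P)"
      by (rule sum.image_gen[OF A])
    also have "\<dots> = (\<Sum>d\<in>dg ` A. real (card {P\<in>A. dg P = d}) * y ^ d)"
      by (intro sum.cong refl) simp
    also have "\<dots> \<le> (\<Sum>d\<in>dg ` A. K * r ^ d)"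
    proof (rule sum_mono)
      fix d assume "d \<in> dg ` A"
      then have d1: "d \<ge> 1" using dg1 by auto
      have "card {P\<in>A. dg P = d} \<le> card {P. dg P = d}" using fin by (intro card_mono) auto
      then have "real (card {P\<in>A. dg P = d}) \<le> K * real q ^ d" using K(2) d1 by (meson of_nat_le_iff order_trans)
      then have "real (card {P\<in>A. dg P = d}) * y ^ d \<le> K * real q ^ d * y ^ d"
        using y0 by (intro mult_right_mono) auto
      also have "\<dots> = K * r ^ d" using qy by (simp add: power_mult_distrib[symmetric] mult.assoc)
      finally show "real (card {P\<in>A. dg P = d}) * y ^ d \<le> K * r ^ d" .
    qed
    also have "\<dots> = K * (\<Sum>d\<in>dg ` A. r ^ d)" by (simp add: sum_distrib_left)
    also have "\<dots> \<le> K * (\<Sum>n. r ^ n)"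
      using K(1) r0 r1 A by (intro mult_left_mono sum_le_suminf summable_geometric) auto
    also have "\<dots> = K * (1 / (1 - r))" using r0 r1 by (simp add: suminf_geometric)
    finally show ?thesis .
  qed
  then show ?thesis unfolding y_def by blast
qed

definition wt :: "(nat \<Rightarrow> nat) \<Rightarrow> nat" where
  "wt v = (\<Sum>i<7. v i)"

definition xP :: "nat \<Rightarrow> real \<Rightarrow> ('p \<Rightarrow> nat) \<Rightarrow> 'p \<Rightarrow> real" where
  "xP q s dg P = real q powr (- s * real (dg P))"

definition hh :: "nat \<Rightarrow> real \<Rightarrow> ('p \<Rightarrow> nat) \<Rightarrow> 'p \<Rightarrow> (nat \<Rightarrow> nat) \<Rightarrow> real" where
  "hh q s dg P v = \<bar>real_of_int (mv v)\<bar> * xP q s dg P ^ wt v"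

lemma total_deg_eq:
  assumes E: "E \<in> Div7" and A: "finite A" "supp E \<subseteq> A"
  shows "total_deg dg E = (\<Sum>P\<in>A. dg P * wt (col E P))"
proof -
  have "div_deg dg (E i) = (\<Sum>P\<in>A. dg P * E i P)" if i: "i < 7" for i
  proof -
    have "{P. E i P \<noteq> 0} \<subseteq> A" using A(2) i by (auto simp: supp_def)
    then show ?thesis unfolding div_deg_def by (intro sum.mono_neutral_left A(1)) auto
  qed
  then have "total_deg dg E = (\<Sum>i<7. \<Sum>P\<in>A. dg P * E i P)" by (simp add: total_deg_def)
  also have "\<dots> = (\<Sum>P\<in>A. \<Sum>i<7. dg P * E i P)" by (rule sum.swap)
  also have "\<dots> = (\<Sum>P\<in>A. dg P * wt (col E P))" by (simp add: wt_def col_def sum_distrib_left)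
  finally show ?thesis .
qed

lemma g_prod:
  assumes E: "E \<in> Div7" and A: "finite A" "supp E \<subseteq> A" and q: "q > 0"
  shows "norm (fmu E) * real q powr (- s * real (total_deg dg E)) = (\<Prod>P\<in>A. hh q s dg P (col E P))"
proof -
  have "norm (fmu E) = (\<Prod>P\<in>A. \<bar>real_of_int (mv (col E P))\<bar>)"
    using fmu_ext[OF E A] by (simp add: prod_norm[symmetric])
  moreover have "real q powr (- s * real (total_deg dg E)) = (\<Prod>P\<in>A. xP q s dg P ^ wt (col E P))"
  proof -
    have "- s * real (total_deg dg E) = (\<Sum>P\<in>A. real (wt (col E P)) * (- s * real (dg P)))"
      by (simp add: total_deg_eq[OF E A] sum_distrib_left algebra_simps)
    then have "real q powr (- s * real (total_deg dg E)) = (\<Prod>P\<in>A. real q powr (real (wt (col E P)) * (- s * real (dg P))))"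
      using q by (simp add: powr_sum)
    also have "\<dots> = (\<Prod>P\<in>A. xP q s dg P ^ wt (col E P))"
      using q by (intro prod.cong refl) (simp add: xP_def powr_power)
    finally show ?thesis .
  qed
  ultimately show ?thesis by (simp add: hh_def prod.distrib)
qed

lemma wt_ind: "S \<subseteq> {..<7} \<Longrightarrow> wt (ind S) = card S"
proof -
  assume S: "S \<subseteq> {..<7}"
  have "wt (ind S) = (\<Sum>i\<in>{..<7}. if i \<in> S then 1 else 0)" by (simp add: wt_def ind_def)
  also have "\<dots> = (\<Sum>i\<in>{i\<in>{..<7}. i \<in> S}. 1)" by (rule sum.inter_filter[symmetric]) simp
  also have "{i\<in>{..<7}. i \<in> S} = S" using S by auto
  finally show ?thesis by simp
qed

lemma inj_ind: "inj_on ind (Pow {..<7})"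
proof (rule inj_onI)
  fix x y assume "x \<in> Pow {..<7}" "y \<in> Pow {..<7}" "ind x = ind y"
  then show "x = y" using pat_ind by (metis PowD)
qed

lemma local_bound:
  assumes x0: "0 \<le> x" and x1: "x \<le> (1::real)"
  shows "(\<Sum>v\<in>ind ` Pow {..<7}. \<bar>real_of_int (mv v)\<bar> * x ^ wt v) \<le> 1 + 16384 * x^2"
proof -
  let ?f = "\<lambda>S. \<bar>real_of_int (loc S)\<bar> * x ^ card S"
  have "(\<Sum>v\<in>ind ` Pow {..<7}. \<bar>real_of_int (mv v)\<bar> * x ^ wt v) = (\<Sum>S\<in>Pow {..<7}. \<bar>real_of_int (mv (ind S))\<bar> * x ^ wt (ind S))"
    by (simp add: sum.reindex[OF inj_ind])
  also have "\<dots> = (\<Sum>S\<in>Pow {..<7}. ?f S)"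
    by (intro sum.cong refl) (simp add: mv_ind wt_ind)
  also have "\<dots> = ?f {} + (\<Sum>S\<in>Pow {..<7} - {{}}. ?f S)"
    by (rule sum.remove) auto
  also have "\<dots> \<le> 1 + real (card (Pow {..<7::nat} - {{}})) * (128 * x^2)"
  proof (rule add_mono)
    show "?f {} \<le> 1" by (simp add: loc_empty)
    show "(\<Sum>S\<in>Pow {..<7} - {{}}. ?f S) \<le> real (card (Pow {..<7::nat} - {{}})) * (128 * x^2)"
    proof (rule sum_bounded_above)
      fix S assume S: "S \<in> Pow {..<7::nat} - {{}}"
      then have S7: "S \<subseteq> {..<7}" "S \<noteq> {}" by auto
      have fS: "finite S" using S7 finite_subset by blast
      have cS: "card S \<le> 7" using card_mono[OF _ S7(1)] by simp
      have l: "\<bar>real_of_int (loc S)\<bar> \<le> 128"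
      proof -
        have "\<bar>loc S\<bar> \<le> 2 ^ card S" by (rule abs_loc[OF fS])
        also have "(2::int) ^ card S \<le> 2 ^ 7" using cS by (intro power_increasing) auto
        finally have "\<bar>loc S\<bar> \<le> 128" by simp
        then show ?thesis by linarith
      qed
      show "?f S \<le> 128 * x^2"
      proof (cases "card S = 1")
        case True
        then obtain i where "S = {i}" by (auto simp: card_Suc_eq)
        then have "loc S = 0" using S7 loc_single by auto
        then show ?thesis using x0 by simp
      next
        case False
        then have "card S \<ge> 2" using S7 fS by (cases "card S") auto
        then have "x ^ card S \<le> x ^ 2" using x0 x1 by (intro power_decreasing) auto
        then show ?thesis using l x0 by (intro mult_mono) auto
      qed
    qed
  qed
  also have "\<dots> \<le> 1 + 16384 * x^2"
  proof -
    have "card (Pow {..<7::nat} - {{}}) \<le> card (Pow {..<7::nat})" by (intro card_mono) auto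
    also have "\<dots> = 128" by (simp add: card_Pow)
    finally have "real (card (Pow {..<7::nat} - {{}})) \<le> 128" by simp
    then have "real (card (Pow {..<7::nat} - {{}})) * (128 * x^2) \<le> 128 * (128 * x^2)"
      using x0 by (intro mult_right_mono) auto
    then show ?thesis by simp
  qed
  finally show ?thesis .
qed

lemma main_bound:
  fixes q :: nat and dg :: "'p \<Rightarrow> nat" and \<epsilon> :: real
  assumes cp: "curve_points q dg" and eps: "\<epsilon> > 0"
  shows "\<exists>M. \<forall>F. F \<subseteq> (Div7 :: (nat \<Rightarrow> 'p \<Rightarrow> nat) set) \<and> finite F \<longrightarrow>
           (\<Sum>E\<in>F. norm (mu_S E) * real q powr (- (1/2 + \<epsilon>) * real (total_deg dg E))) \<le> M"
proof -
  obtain B where B: "\<forall>A. finite A \<longrightarrow> (\<Sum>P\<in>A. (real q powr (-(1 + 2*\<epsilon>))) ^ dg P) \<le> B"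
    using deg_sum_bound[OF cp eps] by blast
  have q2: "q \<ge> 2" by (rule q_ge2[OF cp])
  define s where "s = 1/2 + \<epsilon>"
  define C :: real where "C = 16384"
  define V where "V = ind ` Pow {..<7::nat}"
  have fV: "finite V" by (simp add: V_def)
  have x0: "0 \<le> xP q s dg P" for P by (simp add: xP_def)
  have x1: "xP q s dg P \<le> 1" for P
  proof -
    have "real q powr (- s * real (dg P)) \<le> real q powr 0"
      unfolding s_def using q2 eps by (intro powr_mono mult_nonpos_nonneg) auto
    then show ?thesis using q2 by (simp add: xP_def)
  qed
  have x2: "xP q s dg P ^ 2 = (real q powr (-(1 + 2*\<epsilon>))) ^ dg P" for P
  proof -
    have "xP q s dg P ^ 2 = real q powr (real 2 * (- s * real (dg P)))"
      using q2 by (simp add: xP_def powr_power)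
    also have "\<dots> = real q powr (real (dg P) * (-(1 + 2*\<epsilon>)))"
    proof (rule arg_cong[where f="\<lambda>t. real q powr t"])
      show "real 2 * (- s * real (dg P)) = real (dg P) * (-(1 + 2*\<epsilon>))"
        unfolding s_def by (simp add: algebra_simps)
    qed
    also have "\<dots> = (real q powr (-(1 + 2*\<epsilon>))) ^ dg P"
      using q2 by (simp add: powr_power)
    finally show ?thesis .
  qed
  have "(\<Sum>E\<in>F. norm (mu_S E) * real q powr (- (1/2 + \<epsilon>) * real (total_deg dg E))) \<le> exp (C * B)"
    if F: "F \<subseteq> (Div7 :: (nat \<Rightarrow> 'p \<Rightarrow> nat) set)" "finite F" for F
  proof -
    define A where "A = (\<Union>E\<in>F. supp E)"
    have fA: "finite A" unfolding A_def using F finite_supp by blast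
    have sA: "supp E \<subseteq> A" if "E \<in> F" for E using that by (auto simp: A_def)
    define R where "R = (\<lambda>E::nat \<Rightarrow> 'p \<Rightarrow> nat. restrict (col E) A)"
    define Hh where "Hh = (\<lambda>w. \<Prod>P\<in>A. hh q s dg P (w P))"
    have Hh0: "0 \<le> Hh w" for w unfolding Hh_def hh_def by (intro prod_nonneg) (simp add: x0)
    have "(\<Sum>E\<in>F. norm (mu_S E) * real q powr (- (1/2 + \<epsilon>) * real (total_deg dg E))) = (\<Sum>E\<in>F. Hh (R E))"
    proof (rule sum.cong[OF refl])
      fix E assume E: "E \<in> F"
      have "norm (mu_S E) * real q powr (- (1/2 + \<epsilon>) * real (total_deg dg E))
            = norm (fmu E) * real q powr (- s * real (total_deg dg E))" by (simp add: mu_S_eq s_def)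
      also have "\<dots> = (\<Prod>P\<in>A. hh q s dg P (col E P))"
        using F E q2 by (intro g_prod fA sA) auto
      also have "\<dots> = Hh (R E)" unfolding Hh_def R_def by (intro prod.cong refl) simp
      finally show "norm (mu_S E) * real q powr (- (1/2 + \<epsilon>) * real (total_deg dg E)) = Hh (R E)" .
    qed
    also have "\<dots> = (\<Sum>w\<in>R ` F. Hh w)"
    proof -
      have "inj_on R F"
      proof (rule inj_onI)
        fix E1 E2 assume E1: "E1 \<in> F" and E2: "E2 \<in> F" and e: "R E1 = R E2"
        show "E1 = E2"
        proof (intro ext)
          fix i P show "E1 i P = E2 i P"
          proof (cases "P \<in> A")
            case True
            then show ?thesis using fun_cong[OF fun_cong[OF e, of P], of i] by (simp add: R_def col_def)
          next
            case False
            then have n1: "P \<notin> supp E1" and n2: "P \<notin> supp E2" using sA E1 E2 by auto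
            have d1: "E1 \<in> Div7" and d2: "E2 \<in> Div7" using E1 E2 F by auto
            have c1: "col E1 P = (\<lambda>_. 0)" by (rule col_out[OF d1 n1])
            have c2: "col E2 P = (\<lambda>_. 0)" by (rule col_out[OF d2 n2])
            have "E1 i P = 0" using fun_cong[OF c1, of i] by (simp add: col_def)
            moreover have "E2 i P = 0" using fun_cong[OF c2, of i] by (simp add: col_def)
            ultimately show ?thesis by simp
          qed
        qed
      qed
      then show ?thesis by (simp add: sum.reindex)
    qed
    also have "\<dots> = (\<Sum>w\<in>R ` F \<inter> PiE A (\<lambda>_. V). Hh w)"
    proof (rule sum.mono_neutral_right)
      show "finite (R ` F)" using F by simp
      show "R ` F \<inter> PiE A (\<lambda>_. V) \<subseteq> R ` F" by blast
      show "\<forall>w\<in>R ` F - R ` F \<inter> PiE A (\<lambda>_. V). Hh w = 0"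
      proof
        fix w assume w: "w \<in> R ` F - R ` F \<inter> PiE A (\<lambda>_. V)"
        then obtain E where E: "E \<in> F" "w = R E" by blast
        have ED: "E \<in> Div7" using E F by auto
        have "\<exists>P\<in>A. col E P \<notin> V"
        proof (rule ccontr)
          assume "\<not> (\<exists>P\<in>A. col E P \<notin> V)"
          then have "R E \<in> PiE A (\<lambda>_. V)" by (auto simp: R_def PiE_iff)
          then show False using w E by simp
        qed
        then obtain P where P: "P \<in> A" "col E P \<notin> V" by blast
        have "\<not> (\<forall>i. col E P i \<le> 1)"
        proof
          assume le1: "\<forall>i. col E P i \<le> 1"
          have "col E P = ind (pat (col E P))"
          proof
            fix i show "col E P i = ind (pat (col E P)) i"
              using le1[rule_format, of i] Div7_hi[OF ED, of i P]
              by (cases "i < 7") (auto simp: ind_def pat_def col_def)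
          qed
          moreover have "pat (col E P) \<in> Pow {..<7}" by (auto simp: pat_def)
          ultimately have "col E P \<in> V" unfolding V_def by (metis image_eqI)
          then show False using P by simp
        qed
        then have "mv (col E P) = 0" unfolding mv_def by (simp only: if_False)
        then have "hh q s dg P (w P) = 0" using P E by (simp add: hh_def R_def)
        then show "Hh w = 0" unfolding Hh_def using fA P by (intro prod_zero) auto
      qed
    qed
    also have "\<dots> \<le> (\<Sum>w\<in>PiE A (\<lambda>_. V). Hh w)"
      using fA fV Hh0 by (intro sum_mono2 finite_PiE) auto
    also have "\<dots> = (\<Prod>P\<in>A. \<Sum>v\<in>V. hh q s dg P v)"
      unfolding Hh_def by (rule prod_sum_PiE[symmetric]) (use fA fV in auto)
    also have "\<dots> \<le> (\<Prod>P\<in>A. 1 + C * xP q s dg P ^ 2)"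
    proof (rule prod_mono)
      fix P assume "P \<in> A"
      have "0 \<le> (\<Sum>v\<in>V. hh q s dg P v)" by (intro sum_nonneg) (simp add: hh_def x0)
      moreover have "(\<Sum>v\<in>V. hh q s dg P v) \<le> 1 + C * xP q s dg P ^ 2"
        unfolding hh_def V_def C_def by (rule local_bound[OF x0 x1])
      ultimately show "0 \<le> (\<Sum>v\<in>V. hh q s dg P v) \<and> (\<Sum>v\<in>V. hh q s dg P v) \<le> 1 + C * xP q s dg P ^ 2" by blast
    qed
    also have "\<dots> \<le> (\<Prod>P\<in>A. exp (C * xP q s dg P ^ 2))"
    proof (rule prod_mono)
      fix P assume "P \<in> A"
      have "0 \<le> C * xP q s dg P ^ 2" by (simp add: C_def)
      then show "0 \<le> 1 + C * xP q s dg P ^ 2 \<and> 1 + C * xP q s dg P ^ 2 \<le> exp (C * xP q s dg P ^ 2)"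
        by simp
    qed
    also have "\<dots> = exp (C * (\<Sum>P\<in>A. xP q s dg P ^ 2))"
      by (simp add: exp_sum[OF fA] sum_distrib_left)
    also have "\<dots> \<le> exp (C * B)"
    proof -
      have "(\<Sum>P\<in>A. xP q s dg P ^ 2) = (\<Sum>P\<in>A. (real q powr (-(1 + 2*\<epsilon>))) ^ dg P)"
        by (simp add: x2)
      also have "\<dots> \<le> B" using B fA by blast
      finally show ?thesis by (simp add: C_def)
    qed
    finally show ?thesis .
  qed
  then show ?thesis by blast
qed

theorem mainTheorem11:
  fixes q :: nat and dg :: "'p \<Rightarrow> nat" and \<epsilon> :: real
  assumes "curve_points q dg" and "\<epsilon> > 0"
  shows "(\<lambda>E. norm (mu_S E) * real q powr (- (1/2 + \<epsilon>) * real (total_deg dg E)))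
           summable_on (Div7 :: (nat \<Rightarrow> 'p \<Rightarrow> nat) set)"
proof (rule nonneg_bdd_above_summable_on)
  show "\<And>x. x \<in> Div7 \<Longrightarrow> 0 \<le> norm (mu_S x) * real q powr (- (1/2 + \<epsilon>) * real (total_deg dg x))"
    by simp
  obtain M where M: "\<forall>F. F \<subseteq> (Div7 :: (nat \<Rightarrow> 'p \<Rightarrow> nat) set) \<and> finite F \<longrightarrow>
           (\<Sum>E\<in>F. norm (mu_S E) * real q powr (- (1/2 + \<epsilon>) * real (total_deg dg E))) \<le> M"
    using main_bound[OF assms] by blast
  show "bdd_above (sum (\<lambda>E. norm (mu_S E) * real q powr (- (1/2 + \<epsilon>) * real (total_deg dg E))) `
          {F. F \<subseteq> (Div7 :: (nat \<Rightarrow> 'p \<Rightarrow> nat) set) \<and> finite F})"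
    using M by (intro bdd_aboveI[of _ M]) auto
qed

end
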